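(* Consider the system $x^+=f(x,w)$, $y=h(x)+v$ and the FIE described in the context. The FIE is RGAS if the following hold: (a) the system is i-IOSS with $\mathcal{KL}$ bound $\beta(s,t)=c_1s^{a_1}(t+1)^{-b_1}$ for some constants $c_1,a_1,b_1>0$ and all $s,t\ge0$; (b) the infimum in the FIE problem is attained for every $t$ when the cost function is $$V_t(\chi(0)-\bar x_0,\boldsymbol\omega)=l_x(\chi(0)-\bar x_0)(t+1)^{-b_2}+l_{wv}(\boldsymbol\omega,\boldsymbol\nu,t),$$ where $b_2>0$ is a constant, and $l_x$, $l_{wv}$ are continuous and satisfy, for all $x\in\mathbb{R}^n$, $\boldsymbol w\in\mathbb{B}_w$, $\boldsymbol v\in\mathbb{B}_v$, $$c_2|x|^{a_2}\le l_x(x)\le\gamma_x'(|x|),\qquad \underline{\gamma}_w(\|\boldsymbol w\|_{0:t-1})+\underline{\gamma}_v(\|\boldsymbol v\|_{0:t})\le l_{wv}(\boldsymbol w,\boldsymbol v,t)\le\gamma_w(\|\boldsymbol w\|_{0:t-1})+\gamma_v(\|\boldsymbol v\|_{0:t}),$$ with positive constants $c_2,a_2$ and $\underline{\gamma}_w,\underline{\gamma}_v,\gamma_x',\gamma_w,\gamma_v\in\mathcal{K}_\infty$; (c) $\dfrac{a_2}{b_2}\ge\dfrac{a_1}{b_1}$.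
   Context: Notation: $|\cdot|$ is the Euclidean norm; for a sequence $\boldsymbol x=\{x(0),x(1),\dots\}$, $\|\boldsymbol x\|_{a:b}=\max_{a\le i\le b}|x(i)|$. $\mathcal{K}$: continuous, zero at zero, strictly increasing functions $\mathbb{R}_{\ge0}\to\mathbb{R}_{\ge0}$; $\mathcal{K}_\infty$: $\mathcal{K}$-functions tending to $\infty$; $\mathcal{L}$: continuous nonincreasing functions $\mathbb{R}_{\ge0}\to\mathbb{R}_{\ge0}$ tending to $0$; $\mathcal{KL}$: functions $\beta(s,t)$ that are $\mathcal{K}$ in $s$ for each fixed $t$ and $\mathcal{L}$ in $t$ for each fixed $s$. System: $x(t+1)=f(x(t),w(t))$, $y(t)=h(x(t))+v(t)$, with $x\in\mathbb{R}^n$, $w\in\mathbb{R}^g$, $y,v\in\mathbb{R}^p$, $f,h$ continuous and known; the initial state and disturbance sequences $\boldsymbol w,\boldsymbol v$ are unknown but bounded. $x(t;x_0,\boldsymbol w)$ denotes the state at time $t$ from $x(0)=x_0$ under disturbance $\boldsymbol w$. i-IOSS: the system $x^+=f(x,w)$, $y=h(x)$ is i-IOSS (with $\mathcal{KL}$ bound $\beta$) if there exist $\beta\in\mathcal{KL}$, $\alpha_1,\alpha_2\in\mathcal{K}$ such that for all initial states $x_{01},x_{02}$, disturbances $\boldsymbol w_1,\boldsymbol w_2$ and all $t\in\mathbb{I}_{\ge0}$: $|x(t;x_{01},\boldsymbol w_1)-x(t;x_{02},\boldsymbol w_2)|\le\beta(|x_{01}-x_{02}|,t)+\alpha_1(\|\boldsymbol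 w_1-\boldsymbol w_2\|_{0:t-1})+\alpha_2(\|\boldsymbol y_1-\boldsymbol y_2\|_{0:t})$, where $y_j(i)=h(x(i;x_{0j},\boldsymbol w_j))$. FIE: the measurements are $y(i)=h(x(i;x_0,\boldsymbol w))+v(i)$ and $\bar x_0$ is a prior estimate of the initial state. At time $t$ the FIE solves $\inf_{\chi(0),\boldsymbol\omega}V_t(\chi(0)-\bar x_0,\boldsymbol\omega)$ subject to $\chi(i+1)=f(\chi(i),\omega(i))$, $y(i)=h(\chi(i))+\nu(i)$ for $i\in\mathbb{I}_{0:t}$, $\boldsymbol\omega\in\mathbb{B}_w$, $\boldsymbol\nu\in\mathbb{B}_v$, where $\mathbb{B}_w,\mathbb{B}_v$ are given sets of bounded disturbance sequences; $\boldsymbol\nu$ is determined by $\chi(0),\boldsymbol\omega$ and the data. The optimal solution is denoted $(\hat x(0|t),\hat{\boldsymbol w}_t)$. RGAS: the estimate is RGAS if for all $x_0,\bar x_0$ and bounded $(\boldsymbol w,\boldsymbol v)$ there exist $\beta_x\in\mathcal{KL}$ and $\alpha_w,\alpha_v\in\mathcal{K}$ such that for all $t\in\mathbb{I}_{\ge0}$: $|x(t;x_0,\boldsymbol w)-x(t;\hat x(0|t),\hat{\boldsymbol w}_t)|\le\beta_x(|x_0-\bar x_0|,t)+\alpha_w(\|\boldsymbol w\|_{0:t-1})+\alpha_v(\|\boldsymbol v\|_{0:t})$. *)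

theory Defs
  imports "HOL-Analysis.Analysis"
begin

text \<open>Comparison functions on the nonnegative reals (rendered as real functions,
  all conditions imposed on the domain {0..}).\<close>

definition class_K :: "(real \<Rightarrow> real) \<Rightarrow> bool" where
  "class_K g \<longleftrightarrow> continuous_on {0..} g \<and> g 0 = 0 \<and> strict_mono_on {0..} g"

definition class_Kinf :: "(real \<Rightarrow> real) \<Rightarrow> bool" where
  "class_Kinf g \<longleftrightarrow> class_K g \<and> filterlim g at_top at_top"

definition class_L :: "(real \<Rightarrow> real) \<Rightarrow> bool" where
  "class_L g \<longleftrightarrow> continuous_on {0..} g \<and> (\<forall>t\<ge>0. g t \<ge> 0)
     \<and> (\<forall>s t. 0 \<le> s \<longrightarrow> s \<le> t \<longrightarrow> g t \<le> g s) \<and> (g \<longlongrightarrow> 0) at_top"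

definition class_KL :: "(real \<Rightarrow> real \<Rightarrow> real) \<Rightarrow> bool" where
  "class_KL \<beta> \<longleftrightarrow> (\<forall>t\<ge>0. class_K (\<lambda>s. \<beta> s t)) \<and> (\<forall>s\<ge>0. class_L (\<lambda>t. \<beta> s t))"

definition snorm_lt :: "(nat \<Rightarrow> 'a::real_normed_vector) \<Rightarrow> nat \<Rightarrow> real" where
  "snorm_lt x t = Max (insert 0 ((\<lambda>i. norm (x i)) ` {..<t}))"

definition snorm_le :: "(nat \<Rightarrow> 'a::real_normed_vector) \<Rightarrow> nat \<Rightarrow> real" where
  "snorm_le x t = snorm_lt x (Suc t)"

primrec traj :: "('x \<Rightarrow> 'w \<Rightarrow> 'x) \<Rightarrow> 'x \<Rightarrow> (nat \<Rightarrow> 'w) \<Rightarrow> nat \<Rightarrow> 'x" where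
  "traj f x0 w 0 = x0"
| "traj f x0 w (Suc t) = f (traj f x0 w t) (w t)"

definition i_IOSS ::
  "('x::real_normed_vector \<Rightarrow> 'w::real_normed_vector \<Rightarrow> 'x) \<Rightarrow> ('x \<Rightarrow> 'y::real_normed_vector)
    \<Rightarrow> (real \<Rightarrow> real \<Rightarrow> real) \<Rightarrow> bool" where
  "i_IOSS f h \<beta> \<longleftrightarrow> class_KL \<beta> \<and>
    (\<exists>\<alpha>1 \<alpha>2. class_K \<alpha>1 \<and> class_K \<alpha>2 \<and>
      (\<forall>x01 x02 w1 w2 t.
         norm (traj f x01 w1 t - traj f x02 w2 t)
           \<le> \<beta> (norm (x01 - x02)) (real t)
             + \<alpha>1 (snorm_lt (\<lambda>i. w1 i - w2 i) t)
             + \<alpha>2 (snorm_le (\<lambda>i. h (traj f x01 w1 i) - h (traj f x02 w2 i)) t)))"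

definition FIE_feasible ::
  "('x \<Rightarrow> 'w \<Rightarrow> 'x) \<Rightarrow> ('x \<Rightarrow> 'y::ab_group_add) \<Rightarrow> (nat \<Rightarrow> 'w) set \<Rightarrow> (nat \<Rightarrow> 'y) set
    \<Rightarrow> (nat \<Rightarrow> 'y) \<Rightarrow> nat \<Rightarrow> 'x \<Rightarrow> (nat \<Rightarrow> 'w) \<Rightarrow> (nat \<Rightarrow> 'y) \<Rightarrow> bool" where
  "FIE_feasible f h Bw Bv y t \<chi>0 \<omega> \<nu> \<longleftrightarrow>
     \<omega> \<in> Bw \<and> \<nu> \<in> Bv \<and> (\<forall>i\<le>t. y i = h (traj f \<chi>0 \<omega> i) + \<nu> i)"

definition FIE_opt ::
  "('x::ab_group_add \<Rightarrow> 'w \<Rightarrow> 'x) \<Rightarrow> ('x \<Rightarrow> 'y::ab_group_add) \<Rightarrow> (nat \<Rightarrow> 'w) set \<Rightarrow> (nat \<Rightarrow> 'y) set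
    \<Rightarrow> (nat \<Rightarrow> 'x \<Rightarrow> (nat \<Rightarrow> 'w) \<Rightarrow> (nat \<Rightarrow> 'y) \<Rightarrow> real)
    \<Rightarrow> 'x \<Rightarrow> (nat \<Rightarrow> 'y) \<Rightarrow> nat \<Rightarrow> 'x \<Rightarrow> (nat \<Rightarrow> 'w) \<Rightarrow> (nat \<Rightarrow> 'y) \<Rightarrow> bool" where
  "FIE_opt f h Bw Bv V xbar0 y t \<chi>0 \<omega> \<nu> \<longleftrightarrow>
     FIE_feasible f h Bw Bv y t \<chi>0 \<omega> \<nu> \<and>
     (\<forall>\<chi>0' \<omega>' \<nu>'. FIE_feasible f h Bw Bv y t \<chi>0' \<omega>' \<nu>' \<longrightarrow>
        V t (\<chi>0 - xbar0) \<omega> \<nu> \<le> V t (\<chi>0' - xbar0) \<omega>' \<nu>')"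

end

theory Submission
  imports Defs
begin


lemma K_nonneg: "class_K g \<Longrightarrow> 0 \<le> s \<Longrightarrow> 0 \<le> g s"
  unfolding class_K_def by (metis atLeast_iff order_refl strict_mono_on_leD)

lemma K_mono: "class_K g \<Longrightarrow> 0 \<le> a \<Longrightarrow> a \<le> b \<Longrightarrow> g a \<le> g b"
  unfolding class_K_def by (meson atLeast_iff order_trans strict_mono_on_leD)

lemma K_less: "class_K g \<Longrightarrow> 0 \<le> a \<Longrightarrow> a < b \<Longrightarrow> g a < g b"
  unfolding class_K_def by (meson atLeast_iff less_imp_le order_trans strict_mono_onD)

lemma K_comp:
  assumes "class_K f" "class_K g" shows "class_K (\<lambda>s. f (g s))"
proof -
  have img: "g ` {0..} \<subseteq> {0..}" using K_nonneg[OF assms(2)] by auto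
  have "continuous_on {0..} (\<lambda>s. f (g s))"
    using assms img unfolding class_K_def
    by (auto intro: continuous_on_compose2[of "{0..}" f "{0..}" g])
  moreover have "strict_mono_on {0..} (\<lambda>s. f (g s))"
    by (rule strict_mono_onI) (metis K_less K_nonneg assms atLeast_iff)
  ultimately show ?thesis using assms unfolding class_K_def by auto
qed

lemma K_add:
  assumes "class_K f" "class_K g" shows "class_K (\<lambda>s. f s + g s)"
proof -
  have "strict_mono_on {0..} (\<lambda>s. f s + g s)"
    by (rule strict_mono_onI) (metis K_less add_strict_mono assms atLeast_iff)
  then show ?thesis using assms unfolding class_K_def by (auto intro: continuous_intros)
qed

lemma K_cmul:
  assumes "class_K f" "c > 0" shows "class_K (\<lambda>s. c * f s)"
proof -
  have "strict_mono_on {0..} (\<lambda>s. c * f s)"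
    by (rule strict_mono_onI) (simp add: K_less assms)
  then show ?thesis using assms unfolding class_K_def by (auto intro: continuous_intros)
qed

lemma K_lin: "c > 0 \<Longrightarrow> class_K (\<lambda>s. c * s)"
  unfolding class_K_def by (auto intro!: continuous_intros strict_mono_onI)

lemma K_powr: assumes "p > 0" shows "class_K (\<lambda>s. s powr p)"
proof -
  have "continuous_on {0..} (\<lambda>s::real. s powr p)"
    by (rule continuous_on_powr') (use assms in \<open>auto intro: continuous_intros\<close>)
  moreover have "strict_mono_on {0..} (\<lambda>s::real. s powr p)"
    by (rule strict_mono_onI) (use assms in \<open>auto intro: powr_less_mono2\<close>)
  ultimately show ?thesis unfolding class_K_def by simp
qed

lemma K_sum2: "class_K g \<Longrightarrow> 0 \<le> a \<Longrightarrow> 0 \<le> b \<Longrightarrow> g (a + b) \<le> g (2*a) + g (2*b)"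
proof -
  assume g: "class_K g" and ab: "0 \<le> a" "0 \<le> b"
  have "g (a+b) \<le> g (2 * max a b)" by (rule K_mono[OF g]) (use ab in auto)
  also have "\<dots> \<le> g (2*a) + g (2*b)"
    using K_nonneg[OF g, of "2*a"] K_nonneg[OF g, of "2*b"] ab by (cases "a \<le> b") (auto simp: max_def)
  finally show ?thesis .
qed

lemma K_sum3: "class_K g \<Longrightarrow> 0 \<le> a \<Longrightarrow> 0 \<le> b \<Longrightarrow> 0 \<le> c \<Longrightarrow>
   g (a + b + c) \<le> g (3*a) + g (3*b) + g (3*c)"
proof -
  assume g: "class_K g" and ab: "0 \<le> a" "0 \<le> b" "0 \<le> c"
  have "g (a+b+c) \<le> g (3 * max a (max b c))" by (rule K_mono[OF g]) (use ab in auto)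
  also have "\<dots> \<le> g (3*a) + g (3*b) + g (3*c)"
    using K_nonneg[OF g, of "3*a"] K_nonneg[OF g, of "3*b"] K_nonneg[OF g, of "3*c"] ab
    by (auto simp: max_def)
  finally show ?thesis .
qed

lemma K_sum4: "class_K g \<Longrightarrow> 0 \<le> a \<Longrightarrow> 0 \<le> b \<Longrightarrow> 0 \<le> c \<Longrightarrow> 0 \<le> d \<Longrightarrow>
   g (a + b + c + d) \<le> g (4*a) + g (4*b) + g (4*c) + g (4*d)"
proof -
  assume g: "class_K g" and ab: "0 \<le> a" "0 \<le> b" "0 \<le> c" "0 \<le> d"
  have "g (a+b+c+d) \<le> g (4 * max (max a b) (max c d))" by (rule K_mono[OF g]) (use ab in auto)
  also have "\<dots> \<le> g (4*a) + g (4*b) + g (4*c) + g (4*d)"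
    using K_nonneg[OF g, of "4*a"] K_nonneg[OF g, of "4*b"] K_nonneg[OF g, of "4*c"]
      K_nonneg[OF g, of "4*d"] ab
    by (auto simp: max_def)
  finally show ?thesis .
qed

lemma powr_sum_le:
  fixes A B p :: real
  assumes "0 \<le> A" "0 \<le> B" "0 \<le> p"
  shows "(A + B) powr p \<le> 2 powr p * (A powr p + B powr p)"
proof -
  have "(A + B) powr p \<le> (2 * max A B) powr p" by (rule powr_mono2) (use assms in auto)
  also have "\<dots> = 2 powr p * max A B powr p" using assms by (simp add: powr_mult)
  also have "\<dots> \<le> 2 powr p * (A powr p + B powr p)"
    by (rule mult_left_mono) (auto simp: max_def)
  finally show ?thesis .
qed


definition Kinv :: "(real \<Rightarrow> real) \<Rightarrow> real \<Rightarrow> real" where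
  "Kinv g r = (THE s. 0 \<le> s \<and> g s = r)"

lemma Kinf_surj:
  assumes "class_Kinf g" "0 \<le> r" shows "\<exists>s\<ge>0. g s = r"
proof -
  from assms(1) have lim: "filterlim g at_top at_top" and K: "class_K g"
    unfolding class_Kinf_def by auto
  from lim have "eventually (\<lambda>x. r \<le> g x) at_top" by (simp add: filterlim_at_top)
  then obtain N where N: "\<And>x. x \<ge> N \<Longrightarrow> r \<le> g x" by (auto simp: eventually_at_top_linorder)
  define M where "M = max N 0"
  have "r \<le> g M" using N M_def by auto
  moreover have "g 0 \<le> r" using K assms(2) unfolding class_K_def by auto
  moreover have "continuous_on {0..M} g"
    using K unfolding class_K_def by (auto intro: continuous_on_subset)
  ultimately obtain s where "0 \<le> s" "s \<le> M" "g s = r"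
    using IVT'[of g 0 r M] M_def by auto
  then show ?thesis by auto
qed

lemma K_inj: "class_K g \<Longrightarrow> 0 \<le> a \<Longrightarrow> 0 \<le> b \<Longrightarrow> g a = g b \<Longrightarrow> a = b"
  by (metis K_less linorder_neq_iff order_less_irrefl)

lemma Kinv:
  assumes "class_Kinf g" "0 \<le> r" shows "0 \<le> Kinv g r \<and> g (Kinv g r) = r"
proof -
  have K: "class_K g" using assms(1) unfolding class_Kinf_def by auto
  obtain s where s: "0 \<le> s" "g s = r" using Kinf_surj[OF assms] by auto
  have "\<exists>!s. 0 \<le> s \<and> g s = r" using s K_inj[OF K] by blast
  then show ?thesis unfolding Kinv_def by (rule theI')
qed

lemma Kinv_g:
  assumes "class_Kinf g" "0 \<le> s" shows "Kinv g (g s) = s"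
proof -
  have K: "class_K g" using assms(1) unfolding class_Kinf_def by auto
  have "0 \<le> g s" using K_nonneg[OF K assms(2)] .
  from Kinv[OF assms(1) this] show ?thesis using K_inj[OF K] assms(2) by auto
qed

lemma Kinv_le:
  assumes "class_Kinf g" "0 \<le> s" "g s \<le> r" shows "s \<le> Kinv g r"
proof (rule ccontr)
  have K: "class_K g" using assms(1) unfolding class_Kinf_def by auto
  have r: "0 \<le> r" using K_nonneg[OF K assms(2)] assms(3) by auto
  assume "\<not> s \<le> Kinv g r"
  then have "g (Kinv g r) < g s" using K_less[OF K, of "Kinv g r" s] Kinv[OF assms(1) r] by auto
  then show False using Kinv[OF assms(1) r] assms(3) by auto
qed

lemma Kinv_K:
  assumes "class_Kinf g" shows "class_K (Kinv g)"
proof -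
  have K: "class_K g" using assms(1) unfolding class_Kinf_def by auto
  have z: "Kinv g 0 = 0" using Kinv_g[OF assms, of 0] K unfolding class_K_def by auto
  have sm: "strict_mono_on {0..} (Kinv g)"
  proof (rule strict_mono_onI)
    fix r1 r2 :: real assume r: "r1 \<in> {0..}" "r2 \<in> {0..}" "r1 < r2"
    show "Kinv g r1 < Kinv g r2"
    proof (rule ccontr)
      assume "\<not> Kinv g r1 < Kinv g r2"
      moreover have "0 \<le> Kinv g r2" using Kinv[OF assms] r by auto
      ultimately have "g (Kinv g r2) \<le> g (Kinv g r1)"
        using K_mono[OF K, of "Kinv g r2" "Kinv g r1"] by auto
      then show False using Kinv[OF assms] r by auto
    qed
  qed
  have "continuous (at r within {0..}) (Kinv g)" if r: "0 \<le> r" for r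
  proof -
    obtain N where N: "0 \<le> N" "g N = r + 1" using Kinf_surj[OF assms, of "r+1"] r by auto
    have img: "g ` {0..N} = {0..g N}"
    proof
      show "g ` {0..N} \<subseteq> {0..g N}" using K_nonneg[OF K] K_mono[OF K] by auto
      show "{0..g N} \<subseteq> g ` {0..N}"
      proof
        fix y assume y: "y \<in> {0..g N}"
        have "continuous_on {0..N} g"
          using K unfolding class_K_def by (auto intro: continuous_on_subset)
        moreover have "g 0 \<le> y" using K y unfolding class_K_def by auto
        ultimately obtain x where "0 \<le> x" "x \<le> N" "g x = y"
          using IVT'[of g 0 y N] y N by auto
        then show "y \<in> g ` {0..N}" by auto
      qed
    qed
    have "continuous_on (g ` {0..N}) (Kinv g)"
      by (rule continuous_on_inv) (use K Kinv_g[OF assms] in \<open>auto simp: class_K_def intro: continuous_on_subset\<close>)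
    then have "continuous_on {0..g N} (Kinv g)" using img by simp
    then have c: "continuous (at r within {0..g N}) (Kinv g)"
      using r N by (simp add: continuous_on_eq_continuous_within)
    have "at r within {0..} = at r within {0..g N}"
      by (rule at_within_nhd[where S="{..<g N}"]) (use r N in auto)
    then show ?thesis using c by simp
  qed
  then have "continuous_on {0..} (Kinv g)"
    by (simp add: continuous_on_eq_continuous_within)
  then show ?thesis using z sm unfolding class_K_def by simp
qed

lemma KL_add:
  assumes "class_KL b1" "class_KL b2" shows "class_KL (\<lambda>s t. b1 s t + b2 s t)"
  using assms unfolding class_KL_def class_L_def
  by (auto intro!: K_add continuous_intros add_mono simp: tendsto_add_zero)

lemma KL_comp:
  assumes a: "class_K \<alpha>" and p: "class_K \<phi>" and b: "b > 0"
  shows "class_KL (\<lambda>s t. \<alpha> (\<phi> s * (t + 1) powr (- b)))"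
  unfolding class_KL_def
proof (intro conjI allI impI)
  fix t :: real assume t: "0 \<le> t"
  have "class_K (\<lambda>s. (t+1) powr (-b) * \<phi> s)" using K_cmul[OF p] t by simp
  from K_comp[OF a this] show "class_K (\<lambda>s. \<alpha> (\<phi> s * (t + 1) powr - b))"
    by (simp add: mult.commute)
next
  fix s :: real assume s: "0 \<le> s"
  have ps: "0 \<le> \<phi> s" using K_nonneg[OF p s] .
  have ac: "continuous_on {0..} \<alpha>" using a unfolding class_K_def by simp
  have inner: "continuous_on {0..} (\<lambda>t::real. \<phi> s * (t + 1) powr - b)"
    by (auto intro!: continuous_intros)
  have cont: "continuous_on {0..} (\<lambda>t. \<alpha> (\<phi> s * (t + 1) powr - b))"
    by (rule continuous_on_compose2[OF ac inner]) (use ps in auto)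
  have nn: "\<forall>t\<ge>0. 0 \<le> \<alpha> (\<phi> s * (t + 1) powr - b)"
    using K_nonneg[OF a] ps by auto
  have mono: "\<forall>t1 t2. 0 \<le> t1 \<longrightarrow> t1 \<le> t2 \<longrightarrow>
      \<alpha> (\<phi> s * (t2 + 1) powr - b) \<le> \<alpha> (\<phi> s * (t1 + 1) powr - b)"
  proof (intro allI impI)
    fix t1 t2 :: real assume "0 \<le> t1" "t1 \<le> t2"
    then have "(t2 + 1) powr - b \<le> (t1 + 1) powr - b"
      using b by (intro powr_mono2') auto
    then show "\<alpha> (\<phi> s * (t2 + 1) powr - b) \<le> \<alpha> (\<phi> s * (t1 + 1) powr - b)"
      using ps by (intro K_mono[OF a]) (auto intro: mult_left_mono)
  qed
  have "((\<lambda>t::real. (t + 1) powr - b) \<longlongrightarrow> 0) at_top"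
    by (rule tendsto_neg_powr) (use b filterlim_tendsto_add_at_top[OF tendsto_const filterlim_ident, of 1] in \<open>auto simp: add.commute\<close>)
  then have l0: "((\<lambda>t::real. \<phi> s * (t + 1) powr - b) \<longlongrightarrow> 0) at_top"
    by (rule tendsto_mult_right_zero)
  have "continuous (at 0 within {0..}) \<alpha>" using ac by (simp add: continuous_on_eq_continuous_within)
  then have "((\<lambda>t. \<alpha> (\<phi> s * (t + 1) powr - b)) \<longlongrightarrow> \<alpha> 0) at_top"
    by (rule continuous_within_tendsto_compose[OF _ _ l0])
       (use ps in \<open>auto simp: eventually_at_top_linorder intro!: exI[of _ 0]\<close>)
  then have "((\<lambda>t. \<alpha> (\<phi> s * (t + 1) powr - b)) \<longlongrightarrow> 0) at_top"
    using a unfolding class_K_def by simp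
  then show "class_L (\<lambda>t. \<alpha> (\<phi> s * (t + 1) powr - b))"
    unfolding class_L_def using cont nn mono by simp
qed

lemma KL_lin:
  assumes p: "class_K \<phi>" and b: "b > 0"
  shows "class_KL (\<lambda>s t. \<phi> s * (t + 1) powr (- b))"
  using KL_comp[OF K_lin[of 1] p b] by simp

lemma snorm_lt_ge0: "0 \<le> snorm_lt x t"
  unfolding snorm_lt_def by (rule Max_ge_iff[THEN iffD2]) auto

lemma snorm_lt_ub: "i < t \<Longrightarrow> norm (x i) \<le> snorm_lt x t"
  unfolding snorm_lt_def by (rule Max_ge_iff[THEN iffD2]) auto

lemma snorm_lt_le: "0 \<le> B \<Longrightarrow> (\<And>i. i < t \<Longrightarrow> norm (x i) \<le> B) \<Longrightarrow> snorm_lt x t \<le> B"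
  unfolding snorm_lt_def by (subst Max_le_iff) auto

lemma snorm_le_ge0: "0 \<le> snorm_le x t"
  unfolding snorm_le_def by (rule snorm_lt_ge0)

lemma snorm_le_ub: "i \<le> t \<Longrightarrow> norm (x i) \<le> snorm_le x t"
  unfolding snorm_le_def by (rule snorm_lt_ub) simp

lemma snorm_le_le: "0 \<le> B \<Longrightarrow> (\<And>i. i \<le> t \<Longrightarrow> norm (x i) \<le> B) \<Longrightarrow> snorm_le x t \<le> B"
  unfolding snorm_le_def by (rule snorm_lt_le) auto



theorem corollary2:
  fixes f :: "'x::euclidean_space \<Rightarrow> 'w::euclidean_space \<Rightarrow> 'x"
    and h :: "'x \<Rightarrow> 'y::euclidean_space"
    and Bw :: "(nat \<Rightarrow> 'w) set" and Bv :: "(nat \<Rightarrow> 'y) set"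
    and l_x :: "'x \<Rightarrow> real"
    and l_wv :: "(nat \<Rightarrow> 'w) \<Rightarrow> (nat \<Rightarrow> 'y) \<Rightarrow> nat \<Rightarrow> real"
    and c1 a1 b1 c2 a2 b2 :: real
    and \<gamma>w_low \<gamma>v_low \<gamma>x' \<gamma>w \<gamma>v :: "real \<Rightarrow> real"
  assumes f_cont: "continuous_on UNIV (\<lambda>p. f (fst p) (snd p))"
    and h_cont: "continuous_on UNIV h"
    and Bw_bdd: "\<forall>w\<in>Bw. bounded (range w)"
    and Bv_bdd: "\<forall>v\<in>Bv. bounded (range v)"
    and consts_pos: "c1 > 0" "a1 > 0" "b1 > 0" "c2 > 0" "a2 > 0" "b2 > 0"
    and ioss: "i_IOSS f h (\<lambda>s t. c1 * s powr a1 * (t + 1) powr (- b1))"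
    and K_inf: "class_Kinf \<gamma>w_low" "class_Kinf \<gamma>v_low" "class_Kinf \<gamma>x'"
               "class_Kinf \<gamma>w" "class_Kinf \<gamma>v"
    and lx_cont: "continuous_on UNIV l_x"
    and lwv_cont: "\<forall>t. continuous_on UNIV (\<lambda>p. l_wv (fst p) (snd p) t)"
    and lx_bounds: "\<forall>x. c2 * norm x powr a2 \<le> l_x x \<and> l_x x \<le> \<gamma>x' (norm x)"
    and lwv_bounds: "\<forall>w\<in>Bw. \<forall>v\<in>Bv. \<forall>t.
          \<gamma>w_low (snorm_lt w t) + \<gamma>v_low (snorm_le v t) \<le> l_wv w v t \<and>
          l_wv w v t \<le> \<gamma>w (snorm_lt w t) + \<gamma>v (snorm_le v t)"
    and attained: "\<forall>x0 xbar0. \<forall>w\<in>Bw. \<forall>v\<in>Bv. \<forall>t. \<exists>\<chi>0 \<omega> \<nu>.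
          FIE_opt f h Bw Bv (\<lambda>t e \<omega> \<nu>. l_x e * (real t + 1) powr (- b2) + l_wv \<omega> \<nu> t)
            xbar0 (\<lambda>i. h (traj f x0 w i) + v i) t \<chi>0 \<omega> \<nu>"
    and ratio: "a2 / b2 \<ge> a1 / b1"
  shows "\<forall>x0 xbar0. \<forall>w\<in>Bw. \<forall>v\<in>Bv. \<exists>\<beta>x \<alpha>w \<alpha>v.
           class_KL \<beta>x \<and> class_K \<alpha>w \<and> class_K \<alpha>v \<and>
           (\<forall>t \<chi>0 \<omega> \<nu>.
              FIE_opt f h Bw Bv (\<lambda>t e \<omega> \<nu>. l_x e * (real t + 1) powr (- b2) + l_wv \<omega> \<nu> t)
                xbar0 (\<lambda>i. h (traj f x0 w i) + v i) t \<chi>0 \<omega> \<nu>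
              \<longrightarrow> norm (traj f x0 w t - traj f \<chi>0 \<omega> t)
                    \<le> \<beta>x (norm (x0 - xbar0)) (real t) + \<alpha>w (snorm_lt w t) + \<alpha>v (snorm_le v t))"
proof (intro allI ballI)
  fix x0 xbar0 w v assume w: "w \<in> Bw" and v: "v \<in> Bv"
  from ioss obtain \<alpha>1 \<alpha>2 where a1K: "class_K \<alpha>1" and a2K: "class_K \<alpha>2" and
    bound: "\<And>x01 x02 w1 w2 t. norm (traj f x01 w1 t - traj f x02 w2 t)
           \<le> c1 * norm (x01 - x02) powr a1 * (real t + 1) powr (- b1)
             + \<alpha>1 (snorm_lt (\<lambda>i. w1 i - w2 i) t)
             + \<alpha>2 (snorm_le (\<lambda>i. h (traj f x01 w1 i) - h (traj f x02 w2 i)) t)"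
    unfolding i_IOSS_def by blast
  have gwlK: "class_Kinf \<gamma>w_low" and gvlK: "class_Kinf \<gamma>v_low" using K_inf by auto
  have gxK: "class_K \<gamma>x'" and gwK: "class_K \<gamma>w" and gvK: "class_K \<gamma>v"
    using K_inf unfolding class_Kinf_def by auto
  have gwlK': "class_K \<gamma>w_low" and gvlK': "class_K \<gamma>v_low"
    using K_inf unfolding class_Kinf_def by auto
  define iw where "iw = Kinv \<gamma>w_low"
  define iv where "iv = Kinv \<gamma>v_low"
  have iwK: "class_K iw" unfolding iw_def by (rule Kinv_K[OF gwlK])
  have ivK: "class_K iv" unfolding iv_def by (rule Kinv_K[OF gvlK])
  define r where "r = a1 / a2"
  have rpos: "r > 0" unfolding r_def using consts_pos by simp
  define K0 where "K0 = c1 * 2 powr a1"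
  define K1 where "K1 = K0 * (2 / c2) powr r"
  have K0pos: "K0 > 0" unfolding K0_def using consts_pos by simp
  have K1pos: "K1 > 0" unfolding K1_def using K0pos consts_pos by simp
  have K2pos: "K1 * 2 powr r > 0" using K1pos by simp
  define A1 where "A1 = (\<lambda>u. \<alpha>1 (4 * iw (3 * u)))"
  define A2 where "A2 = (\<lambda>u. \<alpha>2 (4 * iv (3 * u)))"
  have L4: "class_K (\<lambda>s. 4 * s)" and L3: "class_K (\<lambda>s. 3 * s)" by (auto intro: K_lin)
  have A1K: "class_K A1" unfolding A1_def
    by (rule K_comp[OF a1K K_comp[OF L4 K_comp[OF iwK L3]]])
  have A2K: "class_K A2" unfolding A2_def
    by (rule K_comp[OF a2K K_comp[OF L4 K_comp[OF ivK L3]]])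
  define \<phi>0 where "\<phi>0 = (\<lambda>s. K0 * s powr a1 + K1 * \<gamma>x' s powr r)"
  have \<phi>0K: "class_K \<phi>0" unfolding \<phi>0_def
    by (rule K_add[OF K_cmul[OF K_powr K0pos] K_cmul[OF K_comp[OF K_powr[OF rpos] gxK] K1pos]])
       (use consts_pos in simp)
  define \<beta>x where "\<beta>x = (\<lambda>s t. \<phi>0 s * (t + 1) powr (- b1) + A1 (\<gamma>x' s * (t + 1) powr (- b2))
      + A2 (\<gamma>x' s * (t + 1) powr (- b2)))"
  have \<beta>xKL: "class_KL \<beta>x" unfolding \<beta>x_def
    by (rule KL_add[OF KL_add[OF KL_lin[OF \<phi>0K] KL_comp[OF A1K gxK]] KL_comp[OF A2K gxK]])
       (use consts_pos in auto)
  define \<alpha>w where "\<alpha>w = (\<lambda>s. K1 * 2 powr r * \<gamma>w s powr r + \<alpha>1 (4 * s) + A1 (\<gamma>w s) + A2 (\<gamma>w s))"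
  define \<alpha>v where "\<alpha>v = (\<lambda>s. K1 * 2 powr r * \<gamma>v s powr r + \<alpha>2 (4 * s) + A1 (\<gamma>v s) + A2 (\<gamma>v s))"
  have \<alpha>wK: "class_K \<alpha>w" unfolding \<alpha>w_def
    by (rule K_add[OF K_add[OF K_add[OF K_cmul[OF K_comp[OF K_powr[OF rpos] gwK] K2pos]
          K_comp[OF a1K L4]] K_comp[OF A1K gwK]] K_comp[OF A2K gwK]])
  have \<alpha>vK: "class_K \<alpha>v" unfolding \<alpha>v_def
    by (rule K_add[OF K_add[OF K_add[OF K_cmul[OF K_comp[OF K_powr[OF rpos] gvK] K2pos]
          K_comp[OF a2K L4]] K_comp[OF A1K gvK]] K_comp[OF A2K gvK]])
  show "\<exists>\<beta>x \<alpha>w \<alpha>v.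
           class_KL \<beta>x \<and> class_K \<alpha>w \<and> class_K \<alpha>v \<and>
           (\<forall>t \<chi>0 \<omega> \<nu>.
              FIE_opt f h Bw Bv (\<lambda>t e \<omega> \<nu>. l_x e * (real t + 1) powr (- b2) + l_wv \<omega> \<nu> t)
                xbar0 (\<lambda>i. h (traj f x0 w i) + v i) t \<chi>0 \<omega> \<nu>
              \<longrightarrow> norm (traj f x0 w t - traj f \<chi>0 \<omega> t)
                    \<le> \<beta>x (norm (x0 - xbar0)) (real t) + \<alpha>w (snorm_lt w t) + \<alpha>v (snorm_le v t))"
  proof (intro exI conjI allI impI)
    show "class_KL \<beta>x" "class_K \<alpha>w" "class_K \<alpha>v" by fact+
    fix t \<chi>0 \<omega> \<nu>
    assume opt: "FIE_opt f h Bw Bv (\<lambda>t e \<omega> \<nu>. l_x e * (real t + 1) powr (- b2) + l_wv \<omega> \<nu> t)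
                xbar0 (\<lambda>i. h (traj f x0 w i) + v i) t \<chi>0 \<omega> \<nu>"
    have om: "\<omega> \<in> Bw" and nu: "\<nu> \<in> Bv"
      and yeq: "\<And>i. i \<le> t \<Longrightarrow> h (traj f x0 w i) + v i = h (traj f \<chi>0 \<omega> i) + \<nu> i"
      using opt unfolding FIE_opt_def FIE_feasible_def by auto
    have "FIE_feasible f h Bw Bv (\<lambda>i. h (traj f x0 w i) + v i) t x0 w v"
      unfolding FIE_feasible_def using w v by auto
    then have optle: "l_x (\<chi>0 - xbar0) * (real t + 1) powr (- b2) + l_wv \<omega> \<nu> t
        \<le> l_x (x0 - xbar0) * (real t + 1) powr (- b2) + l_wv w v t"
      using opt unfolding FIE_opt_def by blast
    define T where "T = real t + 1"
    define Wn where "Wn = snorm_lt w t"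
    define Vn where "Vn = snorm_le v t"
    define E where "E = norm (x0 - xbar0)"
    define e where "e = norm (\<chi>0 - xbar0)"
    define X where "X = \<gamma>x' E"
    define P where "P = T powr (- b2)"
    define Q where "Q = T powr b2"
    define G where "G = \<gamma>w Wn + \<gamma>v Vn"
    define Vs where "Vs = X * P + G"
    have T1: "1 \<le> T" unfolding T_def by simp
    have Ppos: "0 < P" unfolding P_def using T1 by simp
    have Qpos: "0 < Q" unfolding Q_def using T1 by simp
    have PQ: "P * Q = 1" unfolding P_def Q_def using T1 by (simp add: powr_add[symmetric])
    have Wn0: "0 \<le> Wn" unfolding Wn_def by (rule snorm_lt_ge0)
    have Vn0: "0 \<le> Vn" unfolding Vn_def by (rule snorm_le_ge0)
    have E0: "0 \<le> E" and e0: "0 \<le> e" unfolding E_def e_def by auto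
    have X0: "0 \<le> X" unfolding X_def using K_nonneg[OF gxK E0] .
    have gw0: "0 \<le> \<gamma>w Wn" using K_nonneg[OF gwK Wn0] .
    have gv0: "0 \<le> \<gamma>v Vn" using K_nonneg[OF gvK Vn0] .
    have G0: "0 \<le> G" unfolding G_def using gw0 gv0 by simp
    have XP0: "0 \<le> X * P" using X0 Ppos by simp
    have upper: "l_x (x0 - xbar0) * P + l_wv w v t \<le> Vs"
    proof -
      have "l_x (x0 - xbar0) * P \<le> X * P"
        using lx_bounds Ppos unfolding X_def E_def by (intro mult_right_mono) auto
      moreover have "l_wv w v t \<le> G" using lwv_bounds w v unfolding G_def Wn_def Vn_def by blast
      ultimately show ?thesis unfolding Vs_def by simp
    qed
    have lower: "c2 * e powr a2 * P + (\<gamma>w_low (snorm_lt \<omega> t) + \<gamma>v_low (snorm_le \<nu> t))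
        \<le> l_x (\<chi>0 - xbar0) * P + l_wv \<omega> \<nu> t"
    proof -
      have "c2 * e powr a2 * P \<le> l_x (\<chi>0 - xbar0) * P"
        using lx_bounds Ppos unfolding e_def by (intro mult_right_mono) auto
      moreover have "\<gamma>w_low (snorm_lt \<omega> t) + \<gamma>v_low (snorm_le \<nu> t) \<le> l_wv \<omega> \<nu> t"
        using lwv_bounds om nu by blast
      ultimately show ?thesis by simp
    qed
    have costle: "c2 * e powr a2 * P + (\<gamma>w_low (snorm_lt \<omega> t) + \<gamma>v_low (snorm_le \<nu> t)) \<le> Vs"
      using lower optle upper unfolding P_def T_def by linarith
    have n1: "0 \<le> c2 * e powr a2 * P" using consts_pos Ppos by simp
    have n2: "0 \<le> \<gamma>w_low (snorm_lt \<omega> t)" by (rule K_nonneg[OF gwlK' snorm_lt_ge0])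
    have n3: "0 \<le> \<gamma>v_low (snorm_le \<nu> t)" by (rule K_nonneg[OF gvlK' snorm_le_ge0])
    have oms: "snorm_lt \<omega> t \<le> iw Vs" unfolding iw_def
      by (rule Kinv_le[OF gwlK snorm_lt_ge0]) (use costle n1 n3 in linarith)
    have nus: "snorm_le \<nu> t \<le> iv Vs" unfolding iv_def
      by (rule Kinv_le[OF gvlK snorm_le_ge0]) (use costle n1 n2 in linarith)
    have eP: "c2 * e powr a2 * P \<le> X * P + G" using costle n2 n3 unfolding Vs_def by linarith
    have iwVs: "iw Vs \<le> iw (3 * (X * P)) + iw (3 * \<gamma>w Wn) + iw (3 * \<gamma>v Vn)"
      unfolding Vs_def G_def using K_sum3[OF iwK XP0 gw0 gv0] by (simp add: add.assoc)
    have ivVs: "iv Vs \<le> iv (3 * (X * P)) + iv (3 * \<gamma>w Wn) + iv (3 * \<gamma>v Vn)"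
      unfolding Vs_def G_def using K_sum3[OF ivK XP0 gw0 gv0] by (simp add: add.assoc)
    have Vs0: "0 \<le> Vs" unfolding Vs_def using XP0 G0 by simp
    have iwVs0: "0 \<le> iw Vs" using K_nonneg[OF iwK Vs0] .
    have ivVs0: "0 \<le> iv Vs" using K_nonneg[OF ivK Vs0] .
    have wdiff: "snorm_lt (\<lambda>i. w i - \<omega> i) t \<le> Wn + iw Vs"
    proof (rule snorm_lt_le)
      show "0 \<le> Wn + iw Vs" using Wn0 iwVs0 by simp
      fix i assume i: "i < t"
      have "norm (w i - \<omega> i) \<le> norm (w i) + norm (\<omega> i)" by (rule norm_triangle_ineq4)
      also have "\<dots> \<le> Wn + iw Vs"
        using snorm_lt_ub[OF i, of w] snorm_lt_ub[OF i, of \<omega>] oms unfolding Wn_def by linarith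
      finally show "norm (w i - \<omega> i) \<le> Wn + iw Vs" .
    qed
    have hdiff: "snorm_le (\<lambda>i. h (traj f x0 w i) - h (traj f \<chi>0 \<omega> i)) t \<le> Vn + iv Vs"
    proof (rule snorm_le_le)
      show "0 \<le> Vn + iv Vs" using Vn0 ivVs0 by simp
      fix i assume i: "i \<le> t"
      have "h (traj f x0 w i) - h (traj f \<chi>0 \<omega> i) = \<nu> i - v i"
        using yeq[OF i] by (simp add: algebra_simps eq_diff_eq)
      then have "norm (h (traj f x0 w i) - h (traj f \<chi>0 \<omega> i)) \<le> norm (\<nu> i) + norm (v i)"
        by (simp add: norm_triangle_ineq4)
      also have "\<dots> \<le> Vn + iv Vs"
        using snorm_le_ub[OF i, of v] snorm_le_ub[OF i, of \<nu>] nus unfolding Vn_def by linarith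
      finally show "norm (h (traj f x0 w i) - h (traj f \<chi>0 \<omega> i)) \<le> Vn + iv Vs" .
    qed
    have j1: "0 \<le> iw (3 * (X * P))" "0 \<le> iw (3 * \<gamma>w Wn)" "0 \<le> iw (3 * \<gamma>v Vn)"
      using K_nonneg[OF iwK] XP0 gw0 gv0 by auto
    have j2: "0 \<le> iv (3 * (X * P))" "0 \<le> iv (3 * \<gamma>w Wn)" "0 \<le> iv (3 * \<gamma>v Vn)"
      using K_nonneg[OF ivK] XP0 gw0 gv0 by auto
    have term1: "\<alpha>1 (snorm_lt (\<lambda>i. w i - \<omega> i) t)
        \<le> \<alpha>1 (4 * Wn) + A1 (X * P) + A1 (\<gamma>w Wn) + A1 (\<gamma>v Vn)"
    proof -
      have "\<alpha>1 (snorm_lt (\<lambda>i. w i - \<omega> i) t)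
          \<le> \<alpha>1 (Wn + iw (3 * (X * P)) + iw (3 * \<gamma>w Wn) + iw (3 * \<gamma>v Vn))"
        by (rule K_mono[OF a1K snorm_lt_ge0]) (use wdiff iwVs in linarith)
      also have "\<dots> \<le> \<alpha>1 (4 * Wn) + A1 (X * P) + A1 (\<gamma>w Wn) + A1 (\<gamma>v Vn)"
        unfolding A1_def by (rule K_sum4[OF a1K Wn0 j1])
      finally show ?thesis .
    qed
    have term2: "\<alpha>2 (snorm_le (\<lambda>i. h (traj f x0 w i) - h (traj f \<chi>0 \<omega> i)) t)
        \<le> \<alpha>2 (4 * Vn) + A2 (X * P) + A2 (\<gamma>w Wn) + A2 (\<gamma>v Vn)"
    proof -
      have "\<alpha>2 (snorm_le (\<lambda>i. h (traj f x0 w i) - h (traj f \<chi>0 \<omega> i)) t)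
          \<le> \<alpha>2 (Vn + iv (3 * (X * P)) + iv (3 * \<gamma>w Wn) + iv (3 * \<gamma>v Vn))"
        by (rule K_mono[OF a2K snorm_le_ge0]) (use hdiff ivVs in linarith)
      also have "\<dots> \<le> \<alpha>2 (4 * Vn) + A2 (X * P) + A2 (\<gamma>w Wn) + A2 (\<gamma>v Vn)"
        unfolding A2_def by (rule K_sum4[OF a2K Vn0 j2])
      finally show ?thesis .
    qed
    define R where "R = T powr (- b1)"
    have R0: "0 < R" unfolding R_def using T1 by simp
    have eb: "e powr a2 \<le> X / c2 + G * Q / c2"
    proof -
      have "c2 * e powr a2 = (c2 * e powr a2 * P) * Q" using PQ by (simp add: mult.assoc)
      also have "\<dots> \<le> (X * P + G) * Q" using eP Qpos by (intro mult_right_mono) auto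
      also have "\<dots> = X + G * Q" using PQ by (simp add: distrib_right mult.assoc)
      finally have "c2 * e powr a2 \<le> X + G * Q" .
      then show ?thesis using consts_pos by (simp add: field_simps)
    qed
    have GQ0: "0 \<le> G * Q / c2" using G0 Qpos consts_pos by simp
    have Xc0: "0 \<le> X / c2" using X0 consts_pos by simp
    have ea1: "e powr a1 = (e powr a2) powr r"
      unfolding r_def using consts_pos by (simp add: powr_powr)
    have "e powr a1 \<le> (X / c2 + G * Q / c2) powr r"
      unfolding ea1 by (rule powr_mono2) (use rpos eb in auto)
    also have "\<dots> \<le> 2 powr r * ((X / c2) powr r + (G * Q / c2) powr r)"
      by (rule powr_sum_le[OF Xc0 GQ0]) (use rpos in simp)
    also have "\<dots> = (2 / c2) powr r * (X powr r + G powr r * Q powr r)"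
      using X0 G0 Qpos consts_pos
      by (simp add: powr_divide powr_mult field_simps)
    finally have ea: "e powr a1 \<le> (2 / c2) powr r * (X powr r + G powr r * Q powr r)" .
    have QR: "Q powr r * R \<le> 1"
    proof -
      have "Q powr r * R = T powr (b2 * r) * T powr (- b1)"
        unfolding Q_def R_def using T1 by (simp add: powr_powr)
      also have "\<dots> = T powr (b2 * r - b1)"
        by (subst powr_add[symmetric]) simp
      also have "\<dots> \<le> T powr 0"
      proof (rule powr_mono[OF _ T1])
        have "a1 * b2 \<le> a2 * b1" using ratio consts_pos by (simp add: field_simps)
        then show "b2 * r - b1 \<le> 0" unfolding r_def using consts_pos by (simp add: field_simps)
      qed
      finally show ?thesis using T1 by simp
    qed
    have Gr0: "0 \<le> G powr r" by simp
    have eterm: "K0 * e powr a1 * R \<le> K1 * (X powr r * R + G powr r)"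
    proof -
      have "K0 * e powr a1 * R \<le> K0 * ((2 / c2) powr r * (X powr r + G powr r * Q powr r)) * R"
        using ea K0pos R0 by (intro mult_right_mono mult_left_mono) auto
      also have "\<dots> = K1 * (X powr r * R + G powr r * (Q powr r * R))"
        unfolding K1_def by (simp add: algebra_simps)
      also have "\<dots> \<le> K1 * (X powr r * R + G powr r)"
        using QR K1pos Gr0 by (intro mult_left_mono add_left_mono) (auto intro: mult_left_le)
      finally show ?thesis .
    qed
    have Gr: "G powr r \<le> 2 powr r * (\<gamma>w Wn powr r + \<gamma>v Vn powr r)"
      unfolding G_def by (rule powr_sum_le[OF gw0 gv0]) (use rpos in simp)
    have nterm: "c1 * norm (x0 - \<chi>0) powr a1 * R \<le> K0 * E powr a1 * R + K0 * e powr a1 * R"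
    proof -
      have "norm (x0 - \<chi>0) \<le> E + e" unfolding E_def e_def
        using norm_triangle_ineq4[of "x0 - xbar0" "\<chi>0 - xbar0"] by simp
      then have "norm (x0 - \<chi>0) powr a1 \<le> (E + e) powr a1"
        by (intro powr_mono2) (use consts_pos in auto)
      also have "\<dots> \<le> 2 powr a1 * (E powr a1 + e powr a1)"
        by (rule powr_sum_le[OF E0 e0]) (use consts_pos in simp)
      finally have "c1 * norm (x0 - \<chi>0) powr a1 * R \<le> c1 * (2 powr a1 * (E powr a1 + e powr a1)) * R"
        using consts_pos R0 by (intro mult_right_mono mult_left_mono) auto
      then show ?thesis unfolding K0_def by (simp add: algebra_simps)
    qed
    have main: "norm (traj f x0 w t - traj f \<chi>0 \<omega> t)
        \<le> c1 * norm (x0 - \<chi>0) powr a1 * R + \<alpha>1 (snorm_lt (\<lambda>i. w i - \<omega> i) t)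
          + \<alpha>2 (snorm_le (\<lambda>i. h (traj f x0 w i) - h (traj f \<chi>0 \<omega> i)) t)"
      using bound[of x0 w t \<chi>0 \<omega>] unfolding R_def T_def .
    have bx: "\<beta>x E (real t) = (K0 * E powr a1 + K1 * X powr r) * R + A1 (X * P) + A2 (X * P)"
      unfolding \<beta>x_def \<phi>0_def X_def R_def P_def T_def by simp
    have aw: "\<alpha>w Wn = K1 * 2 powr r * \<gamma>w Wn powr r + \<alpha>1 (4 * Wn) + A1 (\<gamma>w Wn) + A2 (\<gamma>w Wn)"
      unfolding \<alpha>w_def ..
    have av: "\<alpha>v Vn = K1 * 2 powr r * \<gamma>v Vn powr r + \<alpha>2 (4 * Vn) + A1 (\<gamma>v Vn) + A2 (\<gamma>v Vn)"
      unfolding \<alpha>v_def ..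
    have K1G: "K1 * G powr r \<le> K1 * 2 powr r * \<gamma>w Wn powr r + K1 * 2 powr r * \<gamma>v Vn powr r"
      using mult_left_mono[OF Gr, of K1] K1pos by (simp add: algebra_simps)
    have bx': "\<beta>x E (real t) = K0 * E powr a1 * R + K1 * X powr r * R + A1 (X * P) + A2 (X * P)"
      unfolding bx by (simp add: distrib_right)
    have et': "K1 * (X powr r * R + G powr r) = K1 * X powr r * R + K1 * G powr r"
      by (simp add: distrib_left mult.assoc)
    have "norm (traj f x0 w t - traj f \<chi>0 \<omega> t) \<le> \<beta>x E (real t) + \<alpha>w Wn + \<alpha>v Vn"
      unfolding bx' aw av using main term1 term2 nterm eterm K1G et'
      by linarith
    then show "norm (traj f x0 w t - traj f \<chi>0 \<omega> t)
        \<le> \<beta>x (norm (x0 - xbar0)) (real t) + \<alpha>w (snorm_lt w t) + \<alpha>v (snorm_le v t)"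
      unfolding E_def Wn_def Vn_def .
  qed
qed

end
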